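(* Let $0<p,q\le\infty$ and let $g$ be an entire function such that the Volterra-type integral operator $V_g:\mathcal{F}_p\to\mathcal{F}_q$ is compact. Then $V_g$ and $V_{g(0)}$ (the Volterra-type integral operator induced by the constant function $g(0)$) belong to the same path connected component of the space $\mathbf{V}(\mathcal{F}_p,\mathcal{F}_q)$.
   Context: For $0<p<\infty$, the Fock space $\mathcal{F}_p$ consists of entire functions $f$ on $\mathbb{C}$ with $\|f\|_p^p=\frac{p}{2\pi}\int_{\mathbb{C}}|f(z)|^pe^{-\frac p2|z|^2}\,dA(z)<\infty$, where $dA$ is Lebesgue area measure; $\mathcal{F}_\infty$ consists of entire $f$ with $\|f\|_\infty=\sup_{z\in\mathbb{C}}|f(z)|e^{-\frac12|z|^2}<\infty$. For an entire function $g$, the Volterra-type integral operator is $V_gf(z)=\int_0^z f(w)g'(w)\,dw$. $\mathbf{V}(\mathcal{F}_p,\mathcal{F}_q)$ denotes the set of all bounded operators $V_g:\mathcal{F}_p\to\mathcal{F}_q$ ($g$ entire), equipped with the operator norm topology. *)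

theory Defs
  imports "HOL-Complex_Analysis.Complex_Analysis"
begin

text \<open>Exponents p in (0, infinity] are modelled as ennreal values; p = top means p = infinity.\<close>

definition fock_integral :: "real \<Rightarrow> (complex \<Rightarrow> complex) \<Rightarrow> ennreal" where
  "fock_integral r f =
     (\<integral>\<^sup>+ z. ennreal (norm (f z) powr r * exp (- (r / 2) * (norm z)\<^sup>2)) \<partial>lborel)"

definition fock_norm :: "ennreal \<Rightarrow> (complex \<Rightarrow> complex) \<Rightarrow> ennreal" where
  "fock_norm p f =
     (if p = top then (SUP z. ennreal (norm (f z) * exp (- (norm z)\<^sup>2 / 2)))
      else (let r = enn2real p; I = fock_integral r f in
            if I = top then top
            else ennreal ((r / (2 * pi) * enn2real I) powr (1 / r))))"

definition fock :: "ennreal \<Rightarrow> (complex \<Rightarrow> complex) \<Rightarrow> bool" where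
  "fock p f \<longleftrightarrow> f holomorphic_on UNIV \<and> fock_norm p f < top"

definition volterra :: "(complex \<Rightarrow> complex) \<Rightarrow> (complex \<Rightarrow> complex) \<Rightarrow> (complex \<Rightarrow> complex)" where
  "volterra g f = (\<lambda>z. contour_integral (linepath 0 z) (\<lambda>w. f w * deriv g w))"

definition fock_opnorm :: "ennreal \<Rightarrow> ennreal \<Rightarrow> ((complex \<Rightarrow> complex) \<Rightarrow> (complex \<Rightarrow> complex)) \<Rightarrow> ennreal" where
  "fock_opnorm p q T = (SUP f \<in> {f. fock p f \<and> fock_norm p f \<le> 1}. fock_norm q (T f))"

definition fock_bounded_op :: "ennreal \<Rightarrow> ennreal \<Rightarrow> ((complex \<Rightarrow> complex) \<Rightarrow> (complex \<Rightarrow> complex)) \<Rightarrow> bool" where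
  "fock_bounded_op p q T \<longleftrightarrow> (\<forall>f. fock p f \<longrightarrow> fock q (T f)) \<and> fock_opnorm p q T < top"

definition fock_compact_op :: "ennreal \<Rightarrow> ennreal \<Rightarrow> ((complex \<Rightarrow> complex) \<Rightarrow> (complex \<Rightarrow> complex)) \<Rightarrow> bool" where
  "fock_compact_op p q T \<longleftrightarrow> (\<forall>f. fock p f \<longrightarrow> fock q (T f)) \<and>
     (\<forall>fs :: nat \<Rightarrow> complex \<Rightarrow> complex. (\<forall>n. fock p (fs n) \<and> fock_norm p (fs n) \<le> 1) \<longrightarrow>
        (\<exists>r h. strict_mono r \<and> fock q h \<and>
           ((\<lambda>n. fock_norm q (\<lambda>z. T (fs (r n)) z - h z)) \<longlongrightarrow> 0) sequentially))"

definition Vspace :: "ennreal \<Rightarrow> ennreal \<Rightarrow> ((complex \<Rightarrow> complex) \<Rightarrow> (complex \<Rightarrow> complex)) set" where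
  "Vspace p q = {T. \<exists>h. h holomorphic_on UNIV \<and> T = volterra h \<and> fock_bounded_op p q T}"

definition same_path_component_V :: "ennreal \<Rightarrow> ennreal \<Rightarrow> ((complex \<Rightarrow> complex) \<Rightarrow> (complex \<Rightarrow> complex))
     \<Rightarrow> ((complex \<Rightarrow> complex) \<Rightarrow> (complex \<Rightarrow> complex)) \<Rightarrow> bool" where
  "same_path_component_V p q S T \<longleftrightarrow>
     (\<exists>\<gamma> :: real \<Rightarrow> (complex \<Rightarrow> complex) \<Rightarrow> (complex \<Rightarrow> complex).
        (\<forall>t\<in>{0..1}. \<gamma> t \<in> Vspace p q) \<and> \<gamma> 0 = S \<and> \<gamma> 1 = T \<and>
        (\<forall>t\<in>{0..1}. ((\<lambda>s. fock_opnorm p q (\<lambda>f z. \<gamma> s f z - \<gamma> t f z)) \<longlongrightarrow> 0)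
                        (at t within {0..1})))"

end

theory Submission
  imports Defs
begin

lemma fock_integral_cmult:
  assumes r: "r > 0" and Fm: "F \<in> borel_measurable borel"
  shows "fock_integral r (\<lambda>z. c * F z) = ennreal (norm c powr r) * fock_integral r F"
proof -
  have "fock_integral r (\<lambda>z. c * F z) =
     (\<integral>\<^sup>+ z. ennreal (norm c powr r) * ennreal (norm (F z) powr r * exp (- (r / 2) * (norm z)\<^sup>2)) \<partial>lborel)"
    unfolding fock_integral_def
    by (intro nn_integral_cong) (simp add: norm_mult powr_mult ennreal_mult' mult.assoc)
  also have "\<dots> = ennreal (norm c powr r) * fock_integral r F"
    unfolding fock_integral_def by (rule nn_integral_cmult) (use Fm in measurable)
  finally show ?thesis .
qed

lemma fock_norm_cmult:
  assumes q: "q > 0" and Fm: "F \<in> borel_measurable borel"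
  shows "fock_norm q (\<lambda>z. c * F z) = ennreal (norm c) * fock_norm q F"
proof (cases "q = top")
  case True
  then show ?thesis unfolding fock_norm_def
    by (simp add: SUP_mult_left_ennreal norm_mult ennreal_mult' mult.assoc)
next
  case False
  define r where "r = enn2real q"
  have r: "r > 0" using q False unfolding r_def
    by (simp add: enn2real_positive_iff top.not_eq_extremum)
  define I where "I = fock_integral r F"
  have I: "fock_integral r (\<lambda>z. c * F z) = ennreal (norm c powr r) * I"
    using fock_integral_cmult[OF r Fm] I_def by simp
  show ?thesis
  proof (cases "c = 0")
    case True
    then show ?thesis using False I unfolding fock_norm_def r_def[symmetric]
      by (simp add: Let_def)
  next
    case c: False
    show ?thesis
    proof (cases "I = top")
      case True
      then show ?thesis using False I c True[unfolded I_def] unfolding fock_norm_def r_def[symmetric]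
        by (simp add: Let_def ennreal_mult_top)
    next
      case It: False
      have ne: "ennreal (norm c powr r) * I \<noteq> top" using It
        by (simp add: ennreal_mult_eq_top_iff)
      have e: "enn2real (ennreal (norm c powr r) * I) = norm c powr r * enn2real I"
        by (simp add: enn2real_mult)
      have "(r / (2 * pi) * (norm c powr r * enn2real I)) powr (1 / r)
          = (norm c powr r) powr (1/r) * (r / (2 * pi) * enn2real I) powr (1 / r)"
        using r by (simp add: powr_mult[symmetric] mult_ac)
      also have "(norm c powr r) powr (1/r) = norm c"
        using r by (simp add: powr_powr)
      finally show ?thesis using False I It ne e It[unfolded I_def] unfolding fock_norm_def r_def[symmetric]
        by (simp add: Let_def ennreal_mult I_def[symmetric])
    qed
  qed
qed




lemma powr_tri:
  fixes a b :: complex assumes r: "r > 0"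
  shows "norm (a + b) powr r \<le> 2 powr r * (norm a powr r + norm b powr r)"
proof -
  have "norm (a + b) \<le> 2 * max (norm a) (norm b)"
    using norm_triangle_ineq[of a b] by linarith
  hence "norm (a + b) powr r \<le> (2 * max (norm a) (norm b)) powr r"
    using r by (intro powr_mono2) auto
  also have "\<dots> = 2 powr r * max (norm a) (norm b) powr r"
    by (simp add: powr_mult)
  also have "max (norm a) (norm b) powr r \<le> norm a powr r + norm b powr r"
    by (cases "norm a \<le> norm b") (auto simp: max_def)
  finally show ?thesis by (simp add: mult_left_mono)
qed

lemma holo_meas: "f holomorphic_on UNIV \<Longrightarrow> f \<in> borel_measurable borel"
  by (intro borel_measurable_continuous_onI holomorphic_on_imp_continuous_on)

lemma fock_integral_add_le:
  assumes r: "r > 0" and Am: "A \<in> borel_measurable borel" and hm: "h \<in> borel_measurable borel"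
  shows "fock_integral r (\<lambda>z. A z + h z) \<le> ennreal (2 powr r) * (fock_integral r A + fock_integral r h)"
proof -
  have "fock_integral r (\<lambda>z. A z + h z) \<le>
    (\<integral>\<^sup>+ z. ennreal (2 powr r) * (ennreal (norm (A z) powr r * exp (- (r / 2) * (norm z)\<^sup>2))
        + ennreal (norm (h z) powr r * exp (- (r / 2) * (norm z)\<^sup>2))) \<partial>lborel)"
    unfolding fock_integral_def
  proof (intro nn_integral_mono)
    fix z :: complex
    define e where "e = exp (- (r / 2) * (norm z)\<^sup>2)"
    define X where "X = norm (A z) powr r * e"
    define Y where "Y = norm (h z) powr r * e"
    have X0: "X \<ge> 0" and Y0: "Y \<ge> 0" unfolding X_def Y_def e_def by auto
    have "norm (A z + h z) powr r * e \<le>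
       (2 powr r * (norm (A z) powr r + norm (h z) powr r)) * e"
      using powr_tri[OF r] unfolding e_def by (intro mult_right_mono) auto
    also have "\<dots> = 2 powr r * (X + Y)" unfolding X_def Y_def by (simp add: algebra_simps)
    finally have "ennreal (norm (A z + h z) powr r * e) \<le> ennreal (2 powr r * (X + Y))"
      by (rule ennreal_leI)
    also have "\<dots> = ennreal (2 powr r) * (ennreal X + ennreal Y)"
      using X0 Y0 by (simp add: ennreal_mult ennreal_plus)
    finally show "ennreal (norm (A z + h z) powr r * exp (- (r / 2) * (norm z)\<^sup>2)) \<le>
       ennreal (2 powr r) * (ennreal (norm (A z) powr r * exp (- (r / 2) * (norm z)\<^sup>2))
        + ennreal (norm (h z) powr r * exp (- (r / 2) * (norm z)\<^sup>2)))"
      unfolding X_def Y_def e_def .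
  qed
  also have "\<dots> = ennreal (2 powr r) * (fock_integral r A + fock_integral r h)"
  proof -
    have m1: "(\<lambda>z. ennreal (norm (A z) powr r * exp (- (r / 2) * (norm z)\<^sup>2))) \<in> borel_measurable lborel"
      using Am by measurable
    have m2: "(\<lambda>z. ennreal (norm (h z) powr r * exp (- (r / 2) * (norm z)\<^sup>2))) \<in> borel_measurable lborel"
      using hm by measurable
    have m3: "(\<lambda>z. ennreal (norm (A z) powr r * exp (- (r / 2) * (norm z)\<^sup>2)) +
       ennreal (norm (h z) powr r * exp (- (r / 2) * (norm z)\<^sup>2))) \<in> borel_measurable lborel"
      using m1 m2 by (rule borel_measurable_add)
    show ?thesis unfolding fock_integral_def
      by (simp only: nn_integral_cmult[OF m3] nn_integral_add[OF m1 m2])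
  qed
  finally show ?thesis .
qed




lemma fock_norm_finite_bound:
  assumes q: "q > 0" and hf: "fock q h" and hm: "h \<in> borel_measurable borel"
  shows "\<exists>M::real. \<forall>A. A \<in> borel_measurable borel \<and> fock_norm q A \<le> 1 \<longrightarrow>
           fock_norm q (\<lambda>z. A z + h z) \<le> ennreal M"
proof (cases "q = top")
  case True
  have hn: "fock_norm q h < top" using hf unfolding fock_def by auto
  obtain m where m: "fock_norm q h = ennreal m" "m \<ge> 0"
    using hn by (cases "fock_norm q h") auto
  show ?thesis
  proof (intro exI[of _ "1 + m"] allI impI)
    fix A :: "complex \<Rightarrow> complex"
    assume A: "A \<in> borel_measurable borel \<and> fock_norm q A \<le> 1"
    have P: "ennreal (norm (A z + h z) * exp (- (norm z)\<^sup>2 / 2)) \<le>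
         (SUP z. ennreal (norm (A z) * exp (- (norm z)\<^sup>2 / 2))) +
                      (SUP z. ennreal (norm (h z) * exp (- (norm z)\<^sup>2 / 2)))" for z
    proof -
      have "ennreal (norm (A z + h z) * exp (- (norm z)\<^sup>2 / 2)) \<le>
            ennreal (norm (A z) * exp (- (norm z)\<^sup>2 / 2)) + ennreal (norm (h z) * exp (- (norm z)\<^sup>2 / 2))"
        using norm_triangle_ineq[of "A z" "h z"]
        by (simp add: ennreal_plus[symmetric] del: ennreal_plus add: distrib_right[symmetric])
      also have "\<dots> \<le> (SUP z. ennreal (norm (A z) * exp (- (norm z)\<^sup>2 / 2))) +
                      (SUP z. ennreal (norm (h z) * exp (- (norm z)\<^sup>2 / 2)))"
        by (intro add_mono SUP_upper) auto
      finally show ?thesis .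
    qed
    have "fock_norm q (\<lambda>z. A z + h z) = (SUP z. ennreal (norm (A z + h z) * exp (- (norm z)\<^sup>2 / 2)))"
      using True unfolding fock_norm_def by simp
    also have "\<dots> \<le> (SUP z. ennreal (norm (A z) * exp (- (norm z)\<^sup>2 / 2))) +
                      (SUP z. ennreal (norm (h z) * exp (- (norm z)\<^sup>2 / 2)))"
      by (rule SUP_least) (rule P)
    also have "\<dots> = fock_norm q A + fock_norm q h"
      using True unfolding fock_norm_def by simp
    also have "\<dots> \<le> 1 + ennreal m" using A m by (intro add_mono) auto
    also have "\<dots> = ennreal (1 + m)" using m by (simp add: ennreal_plus)
    finally show "fock_norm q (\<lambda>z. A z + h z) \<le> ennreal (1 + m)" .
  qed
next
  case False
  define r where "r = enn2real q"
  have r: "r > 0" using q False unfolding r_def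
    by (simp add: enn2real_positive_iff top.not_eq_extremum)
  have hI: "fock_integral r h \<noteq> top"
    using hf unfolding fock_def fock_norm_def r_def[symmetric] using False
    by (auto simp: Let_def split: if_splits)
  define K where "K = ennreal (2 powr r) * (ennreal (2 * pi / r) + fock_integral r h)"
  have Kt: "K \<noteq> top" unfolding K_def using hI by (simp add: ennreal_mult_eq_top_iff)
  define k where "k = enn2real K"
  have Kk: "K = ennreal k" "k \<ge> 0" unfolding k_def using Kt by (auto simp: ennreal_enn2real_if)
  show ?thesis
  proof (intro exI[of _ "(r / (2 * pi) * k) powr (1 / r)"] allI impI)
    fix A :: "complex \<Rightarrow> complex"
    assume A: "A \<in> borel_measurable borel \<and> fock_norm q A \<le> 1"
    have AI: "fock_integral r A \<noteq> top"
      using A False unfolding fock_norm_def r_def[symmetric] by (auto simp: Let_def top_unique)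
    define E where "E = enn2real (fock_integral r A)"
    have E0: "E \<ge> 0" unfolding E_def by simp
    have "ennreal ((r / (2 * pi) * E) powr (1 / r)) \<le> 1"
      using A False AI unfolding fock_norm_def r_def[symmetric] E_def by (simp add: Let_def)
    hence "(r / (2 * pi) * E) powr (1 / r) \<le> 1"
      by (simp add: ennreal_le_1)
    hence "((r / (2 * pi) * E) powr (1 / r)) powr r \<le> 1 powr r"
      using r by (intro powr_mono2) auto
    hence "r / (2 * pi) * E \<le> 1"
      using r E0 by (simp add: powr_powr)
    hence "E \<le> 2 * pi / r" using r by (simp add: field_simps)
    hence AIle: "fock_integral r A \<le> ennreal (2 * pi / r)"
      using AI unfolding E_def by (metis ennreal_enn2real_if ennreal_leI)
    have "fock_integral r (\<lambda>z. A z + h z) \<le> ennreal (2 powr r) * (fock_integral r A + fock_integral r h)"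
      using fock_integral_add_le[OF r] A hm by auto
    also have "\<dots> \<le> K" unfolding K_def using AIle by (intro mult_left_mono add_mono) auto
    finally have S: "fock_integral r (\<lambda>z. A z + h z) \<le> ennreal k" using Kk by simp
    hence St: "fock_integral r (\<lambda>z. A z + h z) \<noteq> top" by (auto simp: top_unique)
    have "enn2real (fock_integral r (\<lambda>z. A z + h z)) \<le> k"
      using S Kk by (simp add: enn2real_leI)
    hence "(r / (2 * pi) * enn2real (fock_integral r (\<lambda>z. A z + h z))) powr (1 / r)
            \<le> (r / (2 * pi) * k) powr (1 / r)"
      using r by (intro powr_mono2 mult_left_mono) auto
    thus "fock_norm q (\<lambda>z. A z + h z) \<le> ennreal ((r / (2 * pi) * k) powr (1 / r))"
      using False St unfolding fock_norm_def r_def[symmetric] by (simp add: Let_def)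
  qed
qed




lemma fock_meas: "fock q F \<Longrightarrow> F \<in> borel_measurable borel"
  unfolding fock_def by (auto intro: holo_meas)

lemma fock_cmult:
  assumes q: "q > 0" and F: "fock q F"
  shows "fock q (\<lambda>z. c * F z)"
proof -
  have "fock_norm q (\<lambda>z. c * F z) = ennreal (norm c) * fock_norm q F"
    by (rule fock_norm_cmult[OF q fock_meas[OF F]])
  also have "\<dots> < top" using F unfolding fock_def by (simp add: ennreal_mult_less_top)
  finally show ?thesis using F unfolding fock_def by (auto intro: holomorphic_intros)
qed

lemma opnorm_cmult:
  assumes q: "q > 0" and T: "\<forall>f. fock p f \<longrightarrow> fock q (T f)"
  shows "fock_opnorm p q (\<lambda>f z. c * T f z) = ennreal (norm c) * fock_opnorm p q T"
  unfolding fock_opnorm_def SUP_mult_left_ennreal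
  by (intro SUP_cong refl fock_norm_cmult[OF q] fock_meas) (use T in auto)

lemma compact_bounded:
  assumes q: "q > 0" and C: "fock_compact_op p q T"
  shows "fock_opnorm p q T < top"
proof (rule ccontr)
  assume "\<not> fock_opnorm p q T < top"
  hence top: "fock_opnorm p q T = top" by (metis less_top)
  have TF: "\<forall>f. fock p f \<longrightarrow> fock q (T f)" using C unfolding fock_compact_op_def by auto
  have "\<forall>n::nat. \<exists>f. (fock p f \<and> fock_norm p f \<le> 1) \<and> ennreal (real n) < fock_norm q (T f)"
  proof
    fix n :: nat
    have "ennreal (real n) < fock_opnorm p q T" using top by simp
    thus "\<exists>f. (fock p f \<and> fock_norm p f \<le> 1) \<and> ennreal (real n) < fock_norm q (T f)"
      unfolding fock_opnorm_def less_SUP_iff by auto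
  qed
  then obtain fs where fs: "\<And>n. fock p (fs n) \<and> fock_norm p (fs n) \<le> 1"
     "\<And>n. ennreal (real n) < fock_norm q (T (fs n))"
    by metis
  obtain r h where rh: "strict_mono r" "fock q h"
    "((\<lambda>n. fock_norm q (\<lambda>z. T (fs (r n)) z - h z)) \<longlongrightarrow> 0) sequentially"
    using C fs(1) unfolding fock_compact_op_def by blast
  obtain M where M: "\<And>A. A \<in> borel_measurable borel \<and> fock_norm q A \<le> 1 \<Longrightarrow>
           fock_norm q (\<lambda>z. A z + h z) \<le> ennreal M"
    using fock_norm_finite_bound[OF q rh(2) fock_meas[OF rh(2)]] by blast
  have ev1: "eventually (\<lambda>n. fock_norm q (\<lambda>z. T (fs (r n)) z - h z) < 1) sequentially"
    using order_tendstoD(2)[OF rh(3)] by simp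
  have ev2: "eventually (\<lambda>n. n \<ge> nat \<lceil>M\<rceil>) sequentially" by (rule eventually_ge_at_top)
  obtain n where n: "fock_norm q (\<lambda>z. T (fs (r n)) z - h z) < 1" "n \<ge> nat \<lceil>M\<rceil>"
    using eventually_conj[OF ev1 ev2] eventually_sequentially by auto
  have meas: "(\<lambda>z. T (fs (r n)) z - h z) \<in> borel_measurable borel"
    using fock_meas[OF TF[rule_format, OF fs(1)[THEN conjunct1]]] fock_meas[OF rh(2)] by measurable
  have "fock_norm q (\<lambda>z. (T (fs (r n)) z - h z) + h z) \<le> ennreal M"
    using M[of "\<lambda>z. T (fs (r n)) z - h z"] meas n(1) by auto
  hence "fock_norm q (T (fs (r n))) \<le> ennreal M" by simp
  with fs(2)[of "r n"] have "ennreal (real (r n)) < ennreal M" by simp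
  hence "real (r n) < M" by (simp add: ennreal_less_iff)
  moreover have "r n \<ge> n" using seq_suble[OF rh(1)] by simp
  ultimately show False using n(2) by linarith
qed

lemma contour_integral_cmult_any:
  "contour_integral g (\<lambda>x. c * f x) = c * contour_integral g f"
proof (cases "f contour_integrable_on g")
  case True thus ?thesis by (rule contour_integral_lmul)
next
  case False
  show ?thesis
  proof (cases "c = 0")
    case c: False
    hence "\<not> (\<lambda>x. c * f x) contour_integrable_on g" using False contour_integrable_lmul_iff by blast
    thus ?thesis using False by (simp add: not_integrable_contour_integral)
  qed simp
qed

lemma volterra_cmult:
  assumes g: "g holomorphic_on UNIV"
  shows "volterra (\<lambda>z. c * g z) = (\<lambda>f z. c * volterra g f z)"
proof (intro ext)
  fix f z
  have d: "deriv (\<lambda>z. c * g z) w = c * deriv g w" for w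
    by (intro deriv_cmult holomorphic_on_imp_differentiable_at[OF g]) auto
  show "volterra (\<lambda>z. c * g z) f z = c * volterra g f z"
    unfolding volterra_def d
    by (subst contour_integral_cmult_any[symmetric]) (simp add: mult_ac)
qed

theorem theorem2p1:
  fixes p q :: ennreal and g :: "complex \<Rightarrow> complex"
  assumes "0 < p" and "0 < q"
    and "g holomorphic_on UNIV"
    and "fock_compact_op p q (volterra g)"
  shows "same_path_component_V p q (volterra g) (volterra (\<lambda>_. g 0))"
proof -
  note q = assms(2) and g = assms(3) and C = assms(4)
  have TF: "\<forall>f. fock p f \<longrightarrow> fock q (volterra g f)" using C unfolding fock_compact_op_def by auto
  have Bt: "fock_opnorm p q (volterra g) < top" by (rule compact_bounded[OF q C])
  then obtain b where b: "fock_opnorm p q (volterra g) = ennreal b" "b \<ge> 0"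
    by (cases "fock_opnorm p q (volterra g)") auto
  define \<gamma> where "\<gamma> = (\<lambda>(t::real) f z. complex_of_real (1 - t) * volterra g f z)"
  show ?thesis unfolding same_path_component_V_def
  proof (intro exI[of _ \<gamma>] conjI ballI)
    fix t :: real assume "t \<in> {0..1}"
    show "\<gamma> t \<in> Vspace p q"
      unfolding Vspace_def
    proof (intro CollectI exI[of _ "\<lambda>z. complex_of_real (1 - t) * g z"] conjI)
      show "(\<lambda>z. complex_of_real (1 - t) * g z) holomorphic_on UNIV"
        using g by (auto intro: holomorphic_intros)
      show "\<gamma> t = volterra (\<lambda>z. complex_of_real (1 - t) * g z)"
        unfolding \<gamma>_def volterra_cmult[OF g] by simp
      show "fock_bounded_op p q (\<gamma> t)"
        unfolding fock_bounded_op_def \<gamma>_def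
        using TF fock_cmult[OF q] opnorm_cmult[OF q TF] Bt
        by (auto simp: ennreal_mult_less_top)
    qed
  next
    show "\<gamma> 0 = volterra g" unfolding \<gamma>_def by simp
  next
    show "\<gamma> 1 = volterra (\<lambda>_. g 0)" unfolding \<gamma>_def volterra_def by (intro ext) simp
  next
    fix t :: real assume "t \<in> {0..1}"
    have eq: "fock_opnorm p q (\<lambda>f z. \<gamma> s f z - \<gamma> t f z) = ennreal (\<bar>t - s\<bar> * b)" for s
    proof -
      have "(\<lambda>f z. \<gamma> s f z - \<gamma> t f z) = (\<lambda>f z. complex_of_real (t - s) * volterra g f z)"
        unfolding \<gamma>_def by (intro ext) (simp add: algebra_simps)
      thus ?thesis using opnorm_cmult[OF q TF, of "complex_of_real (t - s)"] b
        by (simp del: of_real_diff add: ennreal_mult)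
    qed
    have "((\<lambda>s. ennreal (\<bar>t - s\<bar> * b)) \<longlongrightarrow> ennreal (\<bar>t - t\<bar> * b)) (at t within {0..1})"
      by (intro tendsto_intros)
    thus "((\<lambda>s. fock_opnorm p q (\<lambda>f z. \<gamma> s f z - \<gamma> t f z)) \<longlongrightarrow> 0) (at t within {0..1})"
      unfolding eq by simp
  qed
qed


end
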